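(* Let spacetime be Minkowski spacetime. Let $x^\mu(\tau)$ be the worldline of an arbitrarily accelerated observer with proper time $\tau$, let $e_{(0)}{}^\mu(\tau)=dx^\mu/d\tau$ be its 4-velocity and let $e_{(i)}(\tau)$, $i=1,2,3$, be its (possibly rotating) orthonormal spatial triad along the worldline. Extend this tetrad to a reference frame $e_a(\bar x^\mu)$ by parallel transporting (with respect to the Levi-Civita connection) the observer's tetrad $e_a(\tau)$ to all neighboring points of the spacelike hyperplane orthogonal to $e_{(0)}(\tau)$, for each $\tau$; here $\bar x^\mu$ are the observer's local coordinates. If $e_a(\bar x^\mu)$ is taken as the teleparallel frame, then the gravitational energy-momentum density $t^{\mu a}$ vanishes (on the region where this frame is defined).
   Context: Signature $(+,-,-,-)$. A tetrad (frame) $e_a=e_a{}^\mu\partial_\mu$ with coframe $\theta^a=e^a{}_\mu dx^\mu$ satisfies $g_{\mu\nu}=\eta_{ab}e^a{}_\mu e^b{}_\nu$; Latin (tangent) indices are raised/lowered with $\eta_{ab}$, Greek ones with $g_{\mu\nu}$, and indices are converted between the two types with the tetrad. Taking $e_a$ as the teleparallel frame means the (Weitzenböck) torsion is $T^a{}_{\mu\nu}=\partial_\mu e^a{}_\nu-\partial_\nu e^a{}_\mu$. Define $T_a=T^b{}_{ba}$, the superpotential $\Sigma^{\lambda\mu\nu}=\tfrac14\big(T^{\lambda\mu\nu}+T^{\mu\lambda\nu}-T^{\nu\lambda\mu}\big)+\tfrac12\big(g^{\lambda\nu}T^{\mu}-g^{\lambda\mu}T^{\nu}\big)$, the torsion scalar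 $T=\Sigma^{abc}T_{abc}$, and the gravitational energy-momentum density $t^{\mu a}=k\big(4\Sigma^{bc\mu}T_{bc}{}^{a}-e^{a\mu}T\big)$ with $k=1/(16\pi)$. *)

theory Defs
  imports "HOL-Analysis.Analysis"
begin

text \<open>Minkowski spacetime in global inertial (Cartesian) coordinates X = (X$0,..,X$3),
  signature (+,-,-,-). All indices (Greek and Latin) range over the type 4.\<close>

definition eta :: "4 \<Rightarrow> 4 \<Rightarrow> real" where
  "eta a b = (if a = b then (if a = 0 then 1 else -1) else 0)"

definition mink :: "real^4 \<Rightarrow> real^4 \<Rightarrow> real" where
  "mink u v = (\<Sum>\<mu>\<in>UNIV. \<Sum>\<nu>\<in>UNIV. eta \<mu> \<nu> * u$\<mu> * v$\<nu>)"

definition pd :: "(real^4 \<Rightarrow> real) \<Rightarrow> 4 \<Rightarrow> real^4 \<Rightarrow> real" where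
  "pd f \<mu> X = frechet_derivative f (at X) (axis \<mu> 1)"

text \<open>A frame field E: E a X $ mu = e_a^mu(X). In Cartesian coordinates g = eta.\<close>
type_synonym frame = "4 \<Rightarrow> real^4 \<Rightarrow> real^4"

definition coframe :: "frame \<Rightarrow> 4 \<Rightarrow> 4 \<Rightarrow> real^4 \<Rightarrow> real" where
  "coframe E a \<mu> X = (\<Sum>b\<in>UNIV. \<Sum>\<nu>\<in>UNIV. eta a b * eta \<mu> \<nu> * (E b X)$\<nu>)"

definition torsion :: "frame \<Rightarrow> 4 \<Rightarrow> 4 \<Rightarrow> 4 \<Rightarrow> real^4 \<Rightarrow> real" where
  "torsion E a \<mu> \<nu> X = pd (\<lambda>Y. coframe E a \<nu> Y) \<mu> X - pd (\<lambda>Y. coframe E a \<mu> Y) \<nu> X"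

definition torL :: "frame \<Rightarrow> 4 \<Rightarrow> 4 \<Rightarrow> 4 \<Rightarrow> real^4 \<Rightarrow> real" where
  "torL E a b c X = (\<Sum>d\<in>UNIV. \<Sum>\<mu>\<in>UNIV. \<Sum>\<nu>\<in>UNIV.
      eta a d * (E b X)$\<mu> * (E c X)$\<nu> * torsion E d \<mu> \<nu> X)"

definition torU :: "frame \<Rightarrow> 4 \<Rightarrow> 4 \<Rightarrow> 4 \<Rightarrow> real^4 \<Rightarrow> real" where
  "torU E a b c X = (\<Sum>d\<in>UNIV. \<Sum>f\<in>UNIV. \<Sum>h\<in>UNIV.
      eta a d * eta b f * eta c h * torL E d f h X)"

definition torTr :: "frame \<Rightarrow> 4 \<Rightarrow> real^4 \<Rightarrow> real" where
  "torTr E a X = (\<Sum>b\<in>UNIV. \<Sum>d\<in>UNIV. eta b d * torL E d b a X)"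

definition torTrU :: "frame \<Rightarrow> 4 \<Rightarrow> real^4 \<Rightarrow> real" where
  "torTrU E a X = (\<Sum>b\<in>UNIV. eta a b * torTr E b X)"

definition superpot :: "frame \<Rightarrow> 4 \<Rightarrow> 4 \<Rightarrow> 4 \<Rightarrow> real^4 \<Rightarrow> real" where
  "superpot E l m n X =
     (1/4) * (torU E l m n X + torU E m l n X - torU E n l m X)
   + (1/2) * (eta l n * torTrU E m X - eta l m * torTrU E n X)"

definition torScalar :: "frame \<Rightarrow> real^4 \<Rightarrow> real" where
  "torScalar E X = (\<Sum>a\<in>UNIV. \<Sum>b\<in>UNIV. \<Sum>c\<in>UNIV. superpot E a b c X * torL E a b c X)"

text \<open>Gravitational energy-momentum density
  t^{mu a} = k (4 Sigma^{bc mu} T_{bc}^a - e^{a mu} T), k = 1/(16 pi),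
  with Sigma^{bc mu} = Sigma^{bcd} e_d^mu, T_{bc}^a = T_{bcd} eta^{da}, e^{a mu} = eta^{ab} e_b^mu.\<close>
definition gravEM :: "frame \<Rightarrow> 4 \<Rightarrow> 4 \<Rightarrow> real^4 \<Rightarrow> real" where
  "gravEM E \<mu> a X = (1 / (16 * pi)) *
     (4 * (\<Sum>b\<in>UNIV. \<Sum>c\<in>UNIV.
            (\<Sum>d\<in>UNIV. superpot E b c d X * (E d X)$\<mu>) *
            (\<Sum>d\<in>UNIV. torL E b c d X * eta d a))
      - (\<Sum>b\<in>UNIV. eta a b * (E b X)$\<mu>) * torScalar E X)"

text \<open>The frame obtained from the observer's tetrad e_a(tau) by parallel transport
  (Levi-Civita of Minkowski space: Cartesian components are constant) along the
  hyperplane orthogonal to e_(0)(tau): at a point X on the hyperplane of tau X,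
  the frame is e_a(tau X).\<close>
definition transported_frame :: "(4 \<Rightarrow> real \<Rightarrow> real^4) \<Rightarrow> (real^4 \<Rightarrow> real) \<Rightarrow> frame" where
  "transported_frame e tau a X = e a (tau X)"

end

theory Submission
  imports Defs
begin
lemma four0: "(4::4) = 0" by simp
lemma sum4: "sum f (UNIV::4 set) = f 0 + f 1 + f 2 + f 3"
  using sum_4[of f] unfolding four0 by (simp add: ac_simps)
lemma eta_vals: "eta 0 0 = 1" "eta 1 1 = -1" "eta 2 2 = -1" "eta 3 3 = -1"
  "eta 0 1 = 0" "eta 0 2 = 0" "eta 0 3 = 0" "eta 1 0 = 0" "eta 2 0 = 0" "eta 3 0 = 0"
  "eta 1 2 = 0" "eta 1 3 = 0" "eta 2 1 = 0" "eta 3 1 = 0" "eta 2 3 = 0" "eta 3 2 = 0"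
  by (simp_all add: eta_def)

definition "tUg (tq::4\<Rightarrow>4\<Rightarrow>4\<Rightarrow>real) a b c = (\<Sum>d\<in>UNIV. \<Sum>f\<in>UNIV. \<Sum>h\<in>UNIV. eta a d * eta b f * eta c h * tq d f h)"
definition "tTrg (tq::4\<Rightarrow>4\<Rightarrow>4\<Rightarrow>real) a = (\<Sum>b\<in>UNIV. \<Sum>d\<in>UNIV. eta b d * tq d b a)"
definition "tTrUg tq a = (\<Sum>b\<in>UNIV. eta a b * tTrg tq b)"
definition "spg tq l m n = (1/4) * (tUg tq l m n + tUg tq m l n - tUg tq n l m)
   + (1/2) * (eta l n * tTrUg tq m - eta l m * tTrUg tq n)"
definition "tScg tq = (\<Sum>a\<in>UNIV. \<Sum>b\<in>UNIV. \<Sum>c\<in>UNIV. spg tq a b c * tq a b c)"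
definition "TLf (C::real) \<omega> a b c = C * (eta b 0 * \<omega> a c - eta c 0 * \<omega> a b)"

lemma cases4: "(a::4) = 0 \<or> a = 1 \<or> a = 2 \<or> a = 3"
  using exhaust_4[of a] four0 by metis

lemma sum_eta: "(\<Sum>d\<in>UNIV. eta a d * f d) = eta a a * f a"
  using cases4[of a] by (auto simp: sum4 eta_vals)
lemma sum_eta': "(\<Sum>d\<in>UNIV. eta d a * f d) = eta a a * f a"
  using cases4[of a] by (auto simp: sum4 eta_vals)

lemma tUg_cl: "tUg tq a b c = eta a a * eta b b * eta c c * tq a b c"
proof -
  have "tUg tq a b c = (\<Sum>d\<in>UNIV. eta a d * (\<Sum>f\<in>UNIV. eta b f * (\<Sum>h\<in>UNIV. eta c h * tq d f h)))"
    unfolding tUg_def by (simp add: sum_distrib_left mult.assoc)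
  also have "\<dots> = eta a a * eta b b * eta c c * tq a b c" by (simp add: sum_eta)
  finally show ?thesis .
qed
lemma tTrg_cl: "tTrg tq a = (\<Sum>b\<in>UNIV. eta b b * tq b b a)"
  unfolding tTrg_def by (rule sum.cong[OF refl], rule sum_eta)
lemma tTrUg_cl: "tTrUg tq a = eta a a * tTrg tq a"
  unfolding tTrUg_def by (simp add: sum_eta)
lemma inner_cl: "(\<Sum>e\<in>UNIV. tq b c e * eta e a) = tq b c a * eta a a"
  using sum_eta'[of a "tq b c"] by (simp add: mult.commute)

context
  fixes \<omega> :: "4 \<Rightarrow> 4 \<Rightarrow> real" and C :: real
  assumes anti: "\<And>a c. \<omega> a c = - \<omega> c a"
begin
lemma z: "\<omega> i i = 0" using anti[of i i] by simp
lemma s: "\<omega> 1 0 = - \<omega> 0 1" "\<omega> 2 0 = - \<omega> 0 2" "\<omega> 3 0 = - \<omega> 0 3"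
     "\<omega> 2 1 = - \<omega> 1 2" "\<omega> 3 1 = - \<omega> 1 3" "\<omega> 3 2 = - \<omega> 2 3" by (rule anti)+
lemma tr_cl: "tTrg (TLf C \<omega>) a = C * \<omega> 0 a"
  unfolding tTrg_cl using cases4[of a] by (auto simp: sum4 TLf_def eta_vals z s)
lemma sp_cl: "spg (TLf C \<omega>) l m n = (1/4) * eta l l * eta m m * eta n n * (TLf C \<omega> l m n + TLf C \<omega> m l n - TLf C \<omega> n l m)
   + (1/2) * C * (eta l n * eta m m * \<omega> 0 m - eta l m * eta n n * \<omega> 0 n)"
  unfolding spg_def tUg_cl tTrUg_cl tr_cl by (simp add: algebra_simps)
lemma alg1: "tScg (TLf C \<omega>) = 0"
  unfolding tScg_def sp_cl
  by (simp add: sum4 TLf_def eta_vals z s algebra_simps)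
lemma alg2: "(\<Sum>b\<in>UNIV. \<Sum>c\<in>UNIV. spg (TLf C \<omega>) b c d * (\<Sum>e\<in>UNIV. TLf C \<omega> b c e * eta e a)) = 0"
  unfolding inner_cl sp_cl
  using cases4[of d] cases4[of a]
  by (elim disjE) (simp_all add: sum4 TLf_def eta_vals z s algebra_simps)
end

lemma eta_sq: "eta a a * eta a a = 1" by (simp add: eta_def)
lemma eta_nz: "eta a a \<noteq> 0" by (simp add: eta_def)
lemma eta_sym: "eta a b = eta b a" by (simp add: eta_def)

lemma mink_cl: "mink u v = (\<Sum>m\<in>UNIV. eta m m * u$m * v$m)"
  unfolding mink_def
  apply (rule sum.cong[OF refl]) apply (simp add: mult.assoc) by (rule sum_eta)

lemma mink_sym: "mink u v = mink v u"
  unfolding mink_cl by (simp add: ac_simps)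

lemma dsum: "(\<Sum>m\<in>UNIV. \<Sum>n\<in>UNIV. k * (u::4\<Rightarrow>real) m * v n * (D m * p n - D n * p m))
   = k * ((\<Sum>m\<in>UNIV. u m * D m) * (\<Sum>n\<in>UNIV. v n * p n) - (\<Sum>m\<in>UNIV. u m * p m) * (\<Sum>n\<in>UNIV. v n * D n))"
  by (simp add: sum4 algebra_simps)

lemma swap3: fixes S :: "4\<Rightarrow>4\<Rightarrow>4\<Rightarrow>real" and y :: "4\<Rightarrow>real" shows "(\<Sum>b\<in>UNIV. \<Sum>c\<in>UNIV. (\<Sum>d\<in>UNIV. S b c d * y d) * (Z b c::real))
   = (\<Sum>d\<in>UNIV. y d * (\<Sum>b\<in>UNIV. \<Sum>c\<in>UNIV. S b c d * Z b c))"
proof -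
  have "(\<Sum>b\<in>UNIV. \<Sum>c\<in>UNIV. (\<Sum>d\<in>UNIV. S b c d * y d) * (Z b c::real))
     = (\<Sum>b\<in>(UNIV::4 set). \<Sum>c\<in>(UNIV::4 set). \<Sum>d\<in>(UNIV::4 set). S b c d * y d * Z b c)"
    by (simp add: sum_distrib_right)
  also have "\<dots> = (\<Sum>b\<in>(UNIV::4 set). \<Sum>d\<in>(UNIV::4 set). \<Sum>c\<in>(UNIV::4 set). S b c d * y d * Z b c)"
    by (rule sum.cong[OF refl], rule sum.swap)
  also have "\<dots> = (\<Sum>d\<in>(UNIV::4 set). \<Sum>b\<in>(UNIV::4 set). \<Sum>c\<in>(UNIV::4 set). S b c d * y d * Z b c)"
    by (rule sum.swap)
  also have "\<dots> = (\<Sum>d\<in>UNIV. y d * (\<Sum>b\<in>UNIV. \<Sum>c\<in>UNIV. S b c d * Z b c))"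
    by (simp add: sum_distrib_left mult_ac)
  finally show ?thesis .
qed

lemma superpot_g: "superpot E l m n X = spg (\<lambda>a b c. torL E a b c X) l m n"
  unfolding superpot_def spg_def torU_def tUg_def torTrU_def tTrUg_def torTr_def tTrg_def ..
lemma torScalar_g: "torScalar E X = tScg (\<lambda>a b c. torL E a b c X)"
  unfolding torScalar_def tScg_def superpot_g ..

lemma comp_deriv:
  assumes "(f has_vector_derivative f') (at s)"
  shows "((\<lambda>t. f t $ i) has_field_derivative (f' $ i)) (at s)"
proof -
  have "((\<lambda>t. f t $ i) has_derivative (\<lambda>h. (h *\<^sub>R f') $ i)) (at s)"
    using bounded_linear.has_derivative[OF bounded_linear_vec_nth assms[unfolded has_vector_derivative_def]] .
  moreover have "(\<lambda>h. (h *\<^sub>R f') $ i) = (*) (f' $ i)" by (auto simp: fun_eq_iff)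
  ultimately show ?thesis unfolding has_field_derivative_def by simp
qed

theorem mainTheorem1:
  fixes x :: "real \<Rightarrow> real^4"
    and e :: "4 \<Rightarrow> real \<Rightarrow> real^4"
    and U :: "(real^4) set"
    and tau :: "real^4 \<Rightarrow> real"
  assumes velocity: "\<And>s. (x has_vector_derivative e 0 s) (at s)"
    and tetrad_diff: "\<And>a s. e a differentiable (at s)"
    and orthonormal: "\<And>a b s. mink (e a s) (e b s) = eta a b"
    and U_open: "open U"
    and tau_diff: "\<And>X. X \<in> U \<Longrightarrow> tau differentiable (at X)"
    and hyperplane: "\<And>X. X \<in> U \<Longrightarrow> mink (e 0 (tau X)) (X - x (tau X)) = 0"
  shows "\<forall>X\<in>U. \<forall>\<mu> a. gravEM (transported_frame e tau) \<mu> a X = 0"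
proof (intro ballI allI)
  fix X \<mu> a assume X: "X \<in> U"
  define E where "E = transported_frame e tau"
  define s0 where "s0 = tau X"
  obtain T' where T': "(tau has_derivative T') (at X)"
    using tau_diff[OF X] unfolding differentiable_def by blast
  define e' where "e' b = vector_derivative (e b) (at s0)" for b
  have ev: "(e b has_vector_derivative e' b) (at s0)" for b
    unfolding e'_def using tetrad_diff vector_derivative_works by blast
  have compd: "((\<lambda>t. e b t $ i) has_derivative (\<lambda>h. e' b $ i * h)) (at s0)" for b i
    using comp_deriv[OF ev[of b], of i] unfolding has_field_derivative_def .
  define D where "D k = T' (axis k 1)" for k
  define cfd where "cfd d n = (\<Sum>b\<in>UNIV. \<Sum>m\<in>UNIV. eta d b * eta n m * e' b $ m)" for d n
  have cfd_cl: "cfd d n = eta d d * eta n n * e' d $ n" for d n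
  proof -
    have "cfd d n = (\<Sum>b\<in>UNIV. eta d b * (eta n n * e' b $ n))"
      unfolding cfd_def by (simp add: mult.assoc sum_distrib_left[symmetric] sum_eta)
    also have "\<dots> = eta d d * (eta n n * e' d $ n)" by (rule sum_eta)
    finally show ?thesis by (simp add: mult.assoc)
  qed
  have pd_cf: "pd (\<lambda>Y. coframe E d n Y) k X = D k * cfd d n" for d n k
  proof -
    have cfder: "((\<lambda>s. \<Sum>b\<in>UNIV. \<Sum>m\<in>UNIV. eta d b * eta n m * e b s $ m) has_field_derivative cfd d n) (at (tau X))"
      unfolding cfd_def s0_def[symmetric]
      by (intro DERIV_sum DERIV_cmult comp_deriv ev)
    have "((\<lambda>Y. coframe E d n Y) has_derivative (\<lambda>v. T' v * cfd d n)) (at X)"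
      unfolding coframe_def E_def transported_frame_def
      by (rule DERIV_compose_FDERIV[OF cfder T'])
    then show ?thesis unfolding pd_def D_def by (simp add: frechet_derivative_at[symmetric])
  qed
  have tors: "torsion E d m n X = D m * cfd d n - D n * cfd d m" for d m n
    unfolding torsion_def pd_cf ..
  have fe: "((\<lambda>Y. e 0 (tau Y) $ m) has_derivative (\<lambda>v. T' v * e' 0 $ m)) (at X)" for m
    using DERIV_compose_FDERIV[OF comp_deriv[OF ev[of 0, unfolded s0_def]] T'] .
  have xv: "(x has_vector_derivative e 0 s0) (at s0)" by (rule velocity)
  have fx: "((\<lambda>Y. (Y - x (tau Y)) $ n) has_derivative (\<lambda>v. v $ n - T' v * e 0 s0 $ n)) (at X)" for n
  proof -
    have "((\<lambda>Y. Y $ n - x (tau Y) $ n) has_derivative (\<lambda>v. v $ n - T' v * e 0 s0 $ n)) (at X)"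
      by (intro has_derivative_diff bounded_linear.has_derivative[OF bounded_linear_vec_nth has_derivative_ident]
          DERIV_compose_FDERIV[OF comp_deriv[OF xv, unfolded s0_def] T', folded s0_def])
    then show ?thesis by simp
  qed
  define w where "w = X - x s0"
  have hd: "((\<lambda>Y. \<Sum>m\<in>UNIV. \<Sum>n\<in>UNIV. (eta m n * e 0 (tau Y) $ m) * ((Y - x (tau Y)) $ n)) has_derivative
     (\<lambda>v. \<Sum>m\<in>UNIV. \<Sum>n\<in>UNIV. (eta m n * e 0 (tau X) $ m) * (v $ n - T' v * e 0 s0 $ n)
        + (eta m n * (T' v * e' 0 $ m)) * (X - x (tau X)) $ n)) (at X)"
    by (intro has_derivative_sum has_derivative_mult has_derivative_mult_right fe fx)
  have hd0: "((\<lambda>Y. \<Sum>m\<in>UNIV. \<Sum>n\<in>UNIV. (eta m n * e 0 (tau Y) $ m) * ((Y - x (tau Y)) $ n)) has_derivative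
     (\<lambda>v. 0)) (at X)"
    by (rule has_derivative_transform_within_open[OF has_derivative_const U_open X])
       (use hyperplane in \<open>simp add: mink_def\<close>)
  have hk: "(\<Sum>m\<in>UNIV. \<Sum>n\<in>UNIV. (eta m n * e 0 s0 $ m) * ((axis k 1::real^4) $ n - D k * e 0 s0 $ n)
        + (eta m n * (D k * e' 0 $ m)) * w $ n) = 0" for k
    using fun_cong[OF has_derivative_unique[OF hd hd0], of "axis k 1"]
    unfolding D_def w_def s0_def by simp
  define mm where "mm = mink (e' 0) w"
  have hk': "eta k k * e 0 s0 $ k + D k * (mm - 1) = 0" for k
  proof -
    have "(\<Sum>m\<in>UNIV. \<Sum>n\<in>UNIV. (eta m n * e 0 s0 $ m) * ((axis k 1::real^4) $ n - D k * e 0 s0 $ n)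
        + (eta m n * (D k * e' 0 $ m)) * w $ n)
       = eta k k * e 0 s0 $ k - D k * mink (e 0 s0) (e 0 s0) + D k * mink (e' 0) w"
      using cases4[of k]
      by (elim disjE) (simp_all add: mink_def sum4 axis_def eta_vals algebra_simps)
    then show ?thesis using hk[of k] orthonormal[where a=0 and b=0 and s=s0] by (simp add: mm_def eta_vals algebra_simps)
  qed
  have mm1: "1 - mm \<noteq> 0"
  proof
    assume "1 - mm = 0"
    then have "e 0 s0 $ k = 0" for k using hk'[of k] eta_nz[of k] by simp
    then have "mink (e 0 s0) (e 0 s0) = 0" by (simp add: mink_cl)
    then show False using orthonormal[where a=0 and b=0 and s=s0] by (simp add: eta_vals)
  qed
  define Cc where "Cc = 1 / (1 - mm)"
  have D_cl: "D k = Cc * eta k k * e 0 s0 $ k" for k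
    using hk'[of k] mm1 unfolding Cc_def by (simp add: field_simps)
  define \<omega> where "\<omega> a c = mink (e c s0) (e' a)" for a c
  have od: "mink (e a s0) (e' c) + mink (e' a) (e c s0) = 0" for a c
  proof -
    have h1: "((\<lambda>s. \<Sum>m\<in>UNIV. \<Sum>n\<in>UNIV. (eta m n * e a s $ m) * e c s $ n) has_derivative
      (\<lambda>h. \<Sum>m\<in>UNIV. \<Sum>n\<in>UNIV. (eta m n * e a s0 $ m) * (e' c $ n * h) + (eta m n * (e' a $ m * h)) * e c s0 $ n)) (at s0)"
      by (intro has_derivative_sum has_derivative_mult has_derivative_mult_right compd)
    have "(\<lambda>s. \<Sum>m\<in>UNIV. \<Sum>n\<in>UNIV. (eta m n * e a s $ m) * e c s $ n) = (\<lambda>s. eta a c)"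
      using orthonormal[where a=a and b=c] by (simp add: mink_def fun_eq_iff)
    then have h2: "((\<lambda>s. \<Sum>m\<in>UNIV. \<Sum>n\<in>UNIV. (eta m n * e a s $ m) * e c s $ n) has_derivative (\<lambda>h. 0)) (at s0)"
      by simp
    have "(\<Sum>m\<in>UNIV. \<Sum>n\<in>UNIV. (eta m n * e a s0 $ m) * (e' c $ n * 1) + (eta m n * (e' a $ m * 1)) * e c s0 $ n) = 0"
      using fun_cong[OF has_derivative_unique[OF h1 h2], of 1] by simp
    moreover have "(\<Sum>m\<in>UNIV. \<Sum>n\<in>UNIV. (eta m n * e a s0 $ m) * (e' c $ n * 1) + (eta m n * (e' a $ m * 1)) * e c s0 $ n)
       = mink (e a s0) (e' c) + mink (e' a) (e c s0)"
      unfolding mink_def by (simp add: sum.distrib)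
    ultimately show ?thesis by simp
  qed
  have anti: "\<omega> a c = - \<omega> c a" for a c
    using od[of a c] mink_sym[of "e' a" "e c s0"] unfolding \<omega>_def by simp
  have L1: "(\<Sum>m\<in>UNIV. e b s0 $ m * D m) = Cc * eta b 0" for b
  proof -
    have "(\<Sum>m\<in>UNIV. e b s0 $ m * D m) = Cc * mink (e b s0) (e 0 s0)"
      unfolding D_cl mink_cl sum_distrib_left by (simp add: mult_ac)
    then show ?thesis using orthonormal[where a=b and b=0 and s=s0] by simp
  qed
  have L2: "(\<Sum>n\<in>UNIV. e c s0 $ n * cfd d n) = eta d d * mink (e c s0) (e' d)" for c d
    unfolding cfd_cl mink_cl sum_distrib_left by (simp add: mult_ac)
  have TL: "torL E a b c X = TLf Cc \<omega> a b c" for a b c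
  proof -
    have "torL E a b c X = (\<Sum>d\<in>UNIV. \<Sum>m\<in>UNIV. \<Sum>n\<in>UNIV.
        eta a d * e b s0 $ m * e c s0 $ n * (D m * cfd d n - D n * cfd d m))"
      unfolding torL_def tors by (simp add: E_def transported_frame_def s0_def)
    also have "\<dots> = (\<Sum>d\<in>UNIV. eta a d * ((Cc * eta b 0) * (eta d d * mink (e c s0) (e' d))
          - (eta d d * mink (e b s0) (e' d)) * (Cc * eta c 0)))"
      by (rule sum.cong[OF refl]) (simp only: dsum L1 L2)
    also have "\<dots> = eta a a * ((Cc * eta b 0) * (eta a a * mink (e c s0) (e' a))
          - (eta a a * mink (e b s0) (e' a)) * (Cc * eta c 0))"
      by (rule sum_eta)
    also have "\<dots> = (eta a a * eta a a) * (Cc * (eta b 0 * \<omega> a c - eta c 0 * \<omega> a b))"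
      unfolding \<omega>_def by (simp add: algebra_simps)
    finally show ?thesis unfolding eta_sq TLf_def by simp
  qed
  have TLfun: "(\<lambda>a b c. torL E a b c X) = TLf Cc \<omega>" using TL by (simp add: fun_eq_iff)
  show "gravEM (transported_frame e tau) \<mu> a X = 0"
    unfolding E_def[symmetric] gravEM_def superpot_g torScalar_g TLfun TL
    by (simp add: swap3 alg2[OF anti] alg1[OF anti])
qed

end
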